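(* \textsc{Short Choice} is a total search problem: for every $n\ge 2$ and every instance (universe $U$ with $|U|=2^n-2$ and predicates $P_0,\dots,P_{n-2}$), a solution exists.
   Context: \textsc{Short Choice}: The universe $U$ is a set of $2^n-2$ objects, each represented by a distinct $n$-bit string. The input is a sequence of predicates $P_0,\dots,P_{n-2}$ given by poly($n$)-size circuits, with $P_i:U^{i+2}\to\{0,1\}$. A Long Choice subcertificate is a sequence of distinct elements $a_0,\dots,a_k\in U$ such that for every $i$ with $0\le i<k$ and every $j$ with $i<j\le k$, $P_i(a_0,\dots,a_i,a_j)=P_i(a_0,\dots,a_i,a_{i+1})$. An element $x\in U\setminus\{a_0,\dots,a_k\}$ extends the subcertificate if $a_0,\dots,a_k,x$ is again a Long Choice subcertificate. A solution of \textsc{Short Choice} consists of an integer $k$ with $0\le k\le n-2$, a Long Choice subcertificate $a_0,\dots,a_k$, and a bit $c\in\{0,1\}$ such that there is no $x$ extending $a_0,\dots,a_k$ with $P_k(a_0,\dots,a_k,x)=c$. *)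

theory Defs
  imports Main
begin

text \<open>A sequence a_0,...,a_k is a list of length k+1. The predicate family is
  P :: nat => 'a list => bool, where P i is applied to lists of length i+2
  (the arguments a_0,...,a_i,y).\<close>

definition long_choice_subcert :: "(nat \<Rightarrow> 'a list \<Rightarrow> bool) \<Rightarrow> 'a set \<Rightarrow> 'a list \<Rightarrow> bool" where
  "long_choice_subcert P U as \<longleftrightarrow>
     as \<noteq> [] \<and> distinct as \<and> set as \<subseteq> U \<and>
     (\<forall>i j. i < length as - 1 \<and> i < j \<and> j < length as \<longrightarrow>
        P i (take (i+1) as @ [as ! j]) = P i (take (i+1) as @ [as ! (i+1)]))"

definition extends_subcert :: "(nat \<Rightarrow> 'a list \<Rightarrow> bool) \<Rightarrow> 'a set \<Rightarrow> 'a list \<Rightarrow> 'a \<Rightarrow> bool" where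
  "extends_subcert P U as x \<longleftrightarrow>
     x \<in> U - set as \<and> long_choice_subcert P U (as @ [x])"

definition short_choice_solution :: "nat \<Rightarrow> (nat \<Rightarrow> 'a list \<Rightarrow> bool) \<Rightarrow> 'a set \<Rightarrow> nat \<Rightarrow> 'a list \<Rightarrow> bool \<Rightarrow> bool" where
  "short_choice_solution n P U k as c \<longleftrightarrow>
     k \<le> n - 2 \<and> length as = k + 1 \<and> long_choice_subcert P U as \<and>
     \<not> (\<exists>x. extends_subcert P U as x \<and> P k (as @ [x]) = c)"

end

theory Submission
  imports Defs
begin


lemma subcert_parts:
  "long_choice_subcert P U as \<longleftrightarrow> as \<noteq> [] \<and> distinct as \<and> set as \<subseteq> U \<and>
     (\<forall>i j. i < length as - 1 \<and> i < j \<and> j < length as \<longrightarrow>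
        P i (take (i+1) as @ [as ! j]) = P i (take (i+1) as @ [as ! (i+1)]))"
  by (rule long_choice_subcert_def)

lemma subcert_snoc:
  assumes "as \<noteq> []"
  shows "long_choice_subcert P U (as @ [y]) \<longleftrightarrow>
     long_choice_subcert P U as \<and> y \<in> U \<and> y \<notin> set as \<and>
     (\<forall>i. i < length as - 1 \<longrightarrow> P i (take (i+1) as @ [y]) = P i (take (i+1) as @ [as!(i+1)]))"
proof
  assume h: "long_choice_subcert P U (as @ [y])"
  have h1: "distinct (as@[y])" "set (as@[y]) \<subseteq> U" using h unfolding subcert_parts by blast+
  have h2: "\<forall>i j. i < length (as@[y]) - 1 \<and> i < j \<and> j < length (as@[y]) \<longrightarrow>
        P i (take (i+1) (as@[y]) @ [(as@[y]) ! j]) = P i (take (i+1) (as@[y]) @ [(as@[y]) ! (i+1)])"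
    using h unfolding subcert_parts by blast
  have c: "P i (take (i+1) (as@[y]) @ [(as@[y]) ! j]) = P i (take (i+1) (as@[y]) @ [(as@[y]) ! (i+1)])"
    if "i < length as" "i < j" "j < length as + 1" for i j
  proof -
    have "i < length (as@[y]) - 1 \<and> i < j \<and> j < length (as@[y])" using that by simp
    then show ?thesis using h2 by blast
  qed
  have "long_choice_subcert P U as"
    unfolding subcert_parts
  proof (intro conjI allI impI)
    show "as \<noteq> []" by fact
    show "distinct as" "set as \<subseteq> U" using h1 by auto
    fix i j assume a: "i < length as - 1 \<and> i < j \<and> j < length as"
    have e: "P i (take (i+1) (as@[y]) @ [(as@[y]) ! j]) = P i (take (i+1) (as@[y]) @ [(as@[y]) ! (i+1)])"
      using c[of i j] a by simp
    have "take (i+1) (as@[y]) = take (i+1) as" "(as@[y]) ! j = as ! j" "(as@[y]) ! (i+1) = as ! (i+1)"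
      using a by (auto simp: nth_append)
    then show "P i (take (i + 1) as @ [as ! j]) = P i (take (i + 1) as @ [as ! (i + 1)])"
      using e by simp
  qed
  moreover have "\<forall>i. i < length as - 1 \<longrightarrow> P i (take (i+1) as @ [y]) = P i (take (i+1) as @ [as!(i+1)])"
  proof (intro allI impI)
    fix i assume a: "i < length as - 1"
    have e: "P i (take (i+1) (as@[y]) @ [(as@[y]) ! length as]) = P i (take (i+1) (as@[y]) @ [(as@[y]) ! (i+1)])"
      using c[of i "length as"] a by simp
    have "take (i+1) (as@[y]) = take (i+1) as" "(as@[y]) ! length as = y" "(as@[y]) ! (i+1) = as ! (i+1)"
      using a by (auto simp: nth_append)
    then show "P i (take (i+1) as @ [y]) = P i (take (i+1) as @ [as!(i+1)])"
      using e by simp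
  qed
  ultimately show "long_choice_subcert P U as \<and> y \<in> U \<and> y \<notin> set as \<and>
     (\<forall>i. i < length as - 1 \<longrightarrow> P i (take (i+1) as @ [y]) = P i (take (i+1) as @ [as!(i+1)]))"
    using h1 by auto
next
  assume h: "long_choice_subcert P U as \<and> y \<in> U \<and> y \<notin> set as \<and>
     (\<forall>i. i < length as - 1 \<longrightarrow> P i (take (i+1) as @ [y]) = P i (take (i+1) as @ [as!(i+1)]))"
  have hc: "\<forall>i j. i < length as - 1 \<and> i < j \<and> j < length as \<longrightarrow>
     P i (take (i+1) as @ [as ! j]) = P i (take (i+1) as @ [as ! (i+1)])"
    using h unfolding subcert_parts by blast
  have hy: "\<forall>i. i < length as - 1 \<longrightarrow> P i (take (i+1) as @ [y]) = P i (take (i+1) as @ [as!(i+1)])"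
    using h by blast
  have hd: "distinct as" "set as \<subseteq> U" "y \<in> U" "y \<notin> set as" using h unfolding subcert_parts by blast+
  show "long_choice_subcert P U (as @ [y])"
    unfolding subcert_parts
  proof (intro conjI allI impI)
    show "as @ [y] \<noteq> []" by simp
    show "distinct (as @ [y])" "set (as @ [y]) \<subseteq> U" using hd by auto
    fix i j assume a: "i < length (as @ [y]) - 1 \<and> i < j \<and> j < length (as @ [y])"
    have t: "take (i+1) (as@[y]) = take (i+1) as" using a by simp
    show "P i (take (i + 1) (as @ [y]) @ [(as @ [y]) ! j]) = P i (take (i + 1) (as @ [y]) @ [(as @ [y]) ! (i + 1)])"
    proof (cases "j < length as")
      case True
      have e: "P i (take (i+1) as @ [as ! j]) = P i (take (i+1) as @ [as ! (i+1)])"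
        by (rule hc[rule_format]) (use True a in auto)
      have "(as@[y]) ! j = as ! j" "(as@[y]) ! (i+1) = as ! (i+1)" using a True by (auto simp: nth_append)
      then show ?thesis using e t by simp
    next
      case False
      then have j: "j = length as" using a by simp
      show ?thesis
      proof (cases "i = length as - 1")
        case True then have "i + 1 = j" using j assms by (cases as) auto
        then show ?thesis by simp
      next
        case False
        then have i: "i < length as - 1" using a by auto
        have e: "P i (take (i+1) as @ [y]) = P i (take (i+1) as @ [as!(i+1)])" using hy i by blast
        have "(as@[y]) ! j = y" "(as@[y]) ! (i+1) = as ! (i+1)" using i j by (auto simp: nth_append)
        then show ?thesis using e t by simp
      qed
    qed
  qed
qed

lemma ext_snoc:
  assumes "long_choice_subcert P U as" "extends_subcert P U as x"
  shows "{y. extends_subcert P U (as@[x]) y} =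
     {y \<in> {y. extends_subcert P U as y} - {x}. P (length as - 1) (as@[y]) = P (length as - 1) (as@[x])}"
proof -
  have ne: "as \<noteq> []" using assms(1) unfolding long_choice_subcert_def by auto
  have sx: "long_choice_subcert P U (as @ [x])" using assms(2) unfolding extends_subcert_def by auto
  have L: "length (as @ [x]) - 1 = length as" by simp
  show ?thesis
  proof (intro set_eqI iffI)
    fix y assume "y \<in> {y. extends_subcert P U (as@[x]) y}"
    then have y: "y \<in> U" "y \<notin> set as" "y \<noteq> x"
      and q: "\<forall>i. i < length as \<longrightarrow> P i (take (i+1) (as@[x]) @ [y]) = P i (take (i+1) (as@[x]) @ [(as@[x])!(i+1)])"
      unfolding extends_subcert_def using subcert_snoc[of "as@[x]" P U y] by auto
    have q2: "\<forall>i. i < length as - 1 \<longrightarrow> P i (take (i+1) as @ [y]) = P i (take (i+1) as @ [as!(i+1)])"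
    proof (intro allI impI)
      fix i assume "i < length as - 1"
      then show "P i (take (i+1) as @ [y]) = P i (take (i+1) as @ [as!(i+1)])"
        using q[rule_format, of i] by (auto simp: nth_append)
    qed
    have q3: "P (length as - 1) (as@[y]) = P (length as - 1) (as@[x])"
      using q[rule_format, of "length as - 1"] ne by (simp add: nth_append)
    show "y \<in> {y \<in> {y. extends_subcert P U as y} - {x}. P (length as - 1) (as@[y]) = P (length as - 1) (as@[x])}"
      using y q2 q3 assms(1) subcert_snoc[OF ne, of P U y] unfolding extends_subcert_def by auto
  next
    fix y assume "y \<in> {y \<in> {y. extends_subcert P U as y} - {x}. P (length as - 1) (as@[y]) = P (length as - 1) (as@[x])}"
    then have y: "y \<in> U" "y \<notin> set as" "y \<noteq> x"
      and q2: "\<forall>i. i < length as - 1 \<longrightarrow> P i (take (i+1) as @ [y]) = P i (take (i+1) as @ [as!(i+1)])"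
      and q3: "P (length as - 1) (as@[y]) = P (length as - 1) (as@[x])"
      unfolding extends_subcert_def using subcert_snoc[OF ne, of P U y] by auto
    have q: "\<forall>i. i < length as \<longrightarrow> P i (take (i+1) (as@[x]) @ [y]) = P i (take (i+1) (as@[x]) @ [(as@[x])!(i+1)])"
    proof (intro allI impI)
      fix i assume i: "i < length as"
      show "P i (take (i+1) (as@[x]) @ [y]) = P i (take (i+1) (as@[x]) @ [(as@[x])!(i+1)])"
      proof (cases "i = length as - 1")
        case True
        then show ?thesis using q3 ne i by (simp add: nth_append)
      next
        case False
        then show ?thesis using q2 i by (auto simp: nth_append)
      qed
    qed
    show "y \<in> {y. extends_subcert P U (as@[x]) y}"
      using y q sx subcert_snoc[of "as@[x]" P U y] unfolding extends_subcert_def by auto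
  qed
qed


theorem theorem6:
  fixes n :: nat and U :: "bool list set" and P :: "nat \<Rightarrow> bool list list \<Rightarrow> bool"
  assumes "n \<ge> 2"
    and "\<forall>u\<in>U. length u = n"
    and "card U = 2 ^ n - 2"
  shows "\<exists>k as c. short_choice_solution n P U k as c"
proof (rule ccontr)
  assume H: "\<not> (\<exists>k as c. short_choice_solution n P U k as c)"
  define E where "E as = {y. extends_subcert P U as y}" for as
  have finU: "finite U"
  proof (rule ccontr)
    assume "infinite U" then have "card U = 0" by simp
    moreover have "(2::nat) ^ n \<ge> 2 ^ 2" using assms(1) by (intro power_increasing) auto
    ultimately show False using assms(3) by simp
  qed
  have finE: "finite (E as)" for as
    using finU unfolding E_def extends_subcert_def by (rule rev_finite_subset) auto
  have both: "\<exists>x. x \<in> E as \<and> P k (as @ [x]) = c"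
    if "k \<le> n - 2" "length as = k + 1" "long_choice_subcert P U as" for k as c
  proof -
    have "\<not> short_choice_solution n P U k as c" using H by blast
    then have "\<exists>x. extends_subcert P U as x \<and> P k (as @ [x]) = c"
      using that unfolding short_choice_solution_def by simp
    then show ?thesis unfolding E_def by simp
  qed
  have main: "k \<le> n - 2 \<Longrightarrow> \<exists>as. length as = k+1 \<and> long_choice_subcert P U as \<and> card (E as) + 3 \<le> 2^(n-k)" for k
  proof (induction k)
    case 0
    have "(2::nat) ^ n \<ge> 2 ^ 2" using assms(1) by (intro power_increasing) auto
    then have "U \<noteq> {}" using assms(3) by auto
    then obtain a where a: "a \<in> U" by auto
    have sc: "long_choice_subcert P U [a]" using a unfolding long_choice_subcert_def by auto
    have "E [a] \<subseteq> U - {a}" unfolding E_def extends_subcert_def by auto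
    then have "card (E [a]) \<le> card (U - {a})" using finU by (intro card_mono) auto
    also have "\<dots> = card U - 1" using a finU by simp
    finally have "card (E [a]) + 3 \<le> 2^n" using assms(3) \<open>(2::nat) ^ n \<ge> 2 ^ 2\<close> by simp
    then show ?case using sc by (intro exI[of _ "[a]"]) simp
  next
    case (Suc k)
    then obtain as where as: "length as = k+1" "long_choice_subcert P U as" "card (E as) + 3 \<le> 2^(n-k)"
      by auto
    define A where "A c = {y \<in> E as. P k (as@[y]) = c}" for c
    have kk: "k \<le> n - 2" using Suc by simp
    have neA: "A c \<noteq> {}" for c using both[OF kk as(1,2), of c] unfolding A_def by auto
    have sumA: "card (A True) + card (A False) = card (E as)"
    proof -
      have "E as = A True \<union> A False" "A True \<inter> A False = {}" unfolding A_def by auto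
      moreover have "finite (A True)" "finite (A False)" using finE[of as] unfolding A_def by auto
      ultimately show ?thesis using card_Un_disjoint[of "A True" "A False"] by simp
    qed
    obtain c where c: "2 * card (A c) \<le> card (E as)"
    proof (cases "card (A True) \<le> card (A False)")
      case True then show ?thesis using that[of True] sumA by linarith
    next
      case False then show ?thesis using that[of False] sumA by linarith
    qed
    obtain x where x: "x \<in> A c" using neA by blast
    have xe: "extends_subcert P U as x" using x unfolding A_def E_def by auto
    have Eq: "E (as@[x]) = A c - {x}"
      using ext_snoc[OF as(2) xe] as(1) x unfolding E_def A_def by auto
    have finA: "finite (A c)" using finE[of as] unfolding A_def by auto
    have cardA: "card (A c) \<ge> 1" using x finA by (simp add: Suc_le_eq card_gt_0_iff) blast
    have cE: "card (E (as@[x])) = card (A c) - 1" using Eq x finA by simp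
    have nk: "n - k = Suc (n - Suc k)" using Suc.prems assms(1) by simp
    have p: "(2::nat)^(n-k) = 2 * 2^(n - Suc k)" unfolding nk by simp
    have sc: "long_choice_subcert P U (as@[x])" using xe unfolding extends_subcert_def by auto
    have "card (E (as@[x])) + 3 \<le> 2^(n - Suc k)"
      using c as(3) p cE cardA by linarith
    then show ?case using sc as(1) by (intro exI[of _ "as@[x]"]) simp
  qed
  obtain as where as: "length as = (n-2)+1" "long_choice_subcert P U as" "card (E as) + 3 \<le> 2^(n-(n-2))"
    using main[of "n-2"] by auto
  have "n - (n-2) = 2" using assms(1) by simp
  then have c1: "card (E as) \<le> 1" using as(3) by simp
  obtain x where x: "x \<in> E as" "P (n-2) (as@[x]) = True" using both[OF order.refl as(1,2)] by blast
  obtain y where y: "y \<in> E as" "P (n-2) (as@[y]) = False" using both[OF order.refl as(1,2)] by blast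
  have "x \<noteq> y" using x y by auto
  then have "card {x, y} \<le> card (E as)" using x y finE by (intro card_mono) auto
  then show False using c1 \<open>x \<noteq> y\<close> by simp
qed


end
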